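(* Let $A\in\mathbb R^{m\times n}$, and let $\omega:\mathbb R^m\to\mathbb R$ be convex (finite everywhere) and globally $K_\omega$-Lipschitz continuous. Fix $y\in\mathbb R^n$ and $\lambda>0$ and define $$\Phi_\lambda(u)=\omega(Au)+\frac1{2\lambda}\|u-y\|^2\ (u\in\mathbb R^n),\qquad \Psi_\lambda(v)=\frac1{2\lambda}\|\lambda A^\top v-y\|^2+\omega^\star(v)-\frac1{2\lambda}\|y\|^2\ (v\in\mathbb R^m).$$ Let $\bar v$ be a minimizer of $\Psi_\lambda$, let $(v_j)_{j\ge0}\subseteq\mathbb R^m$ satisfy $\lim_{j\to\infty}\Psi_\lambda(v_j)=\Psi_\lambda(\bar v)$, and set $z_j=y-\lambda A^\top v_j$ and $\bar z=y-\lambda A^\top\bar v$. Then: (i) $\bar z$ is a minimizer of $\Phi_\lambda$; (ii) $\Psi_\lambda(v_j)-\Psi_\lambda(\bar v)\ge\frac1{2\lambda}\|z_j-\bar z\|^2$ for all $j$, and consequently $z_j\to\bar z$; (iii) for all $j$, $$\Phi_\lambda(z_j)-\Phi_\lambda(\bar z)\le\sqrt{\Psi_\lambda(v_j)-\Psi_\lambda(\bar v)}\Big(2\sqrt{2\lambda}\,K_\omega\|A\|+\sqrt{\Psi_\lambda(v_j)-\Psi_\lambda(\bar v)}\Big).$$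
   Context: $\omega^\star(v)=\sup_{z\in\mathbb R^m}\{\langle z,v\rangle-\omega(z)\}$ is the Fenchel conjugate; $\|A\|$ is the operator (spectral) norm. *)

theory Defs
  imports "HOL-Analysis.Analysis"
begin

definition fconj :: "(real^'m \<Rightarrow> real) \<Rightarrow> real^'m \<Rightarrow> ereal" where
  "fconj \<omega> v = (SUP z. ereal (inner z v - \<omega> z))"

definition PhiL :: "real^'n^'m \<Rightarrow> (real^'m \<Rightarrow> real) \<Rightarrow> real^'n \<Rightarrow> real \<Rightarrow> real^'n \<Rightarrow> real" where
  "PhiL A \<omega> y lam u = \<omega> (A *v u) + (1 / (2*lam)) * (norm (u - y))^2"

definition PsiL :: "real^'n^'m \<Rightarrow> (real^'m \<Rightarrow> real) \<Rightarrow> real^'n \<Rightarrow> real \<Rightarrow> real^'m \<Rightarrow> ereal" where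
  "PsiL A \<omega> y lam v = ereal ((1 / (2*lam)) * (norm (lam *\<^sub>R (transpose A *v v) - y))^2)
      + fconj \<omega> v - ereal ((1 / (2*lam)) * (norm y)^2)"

end

theory Submission
  imports Defs
begin

lemma eps_subgrad:
  fixes \<omega> :: "'a::euclidean_space \<Rightarrow> real"
  assumes conv: "convex_on UNIV \<omega>" and cont: "continuous_on UNIV \<omega>" and e: "e > 0"
  shows "\<exists>w c. (\<forall>z. c + inner w z \<le> \<omega> z) \<and> \<omega> x - e < c + inner w x"
proof -
  let ?S = "epigraph UNIV \<omega>"
  have cS: "convex ?S" using conv by (rule convex_epigraphI)
  have clS: "closed ?S"
  proof -
    have "?S = {p. \<omega> (fst p) - snd p \<le> 0}" by (auto simp: epigraph_def)
    moreover have "closed {p. \<omega> (fst p) - snd p \<le> (0::real)}"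
      by (rule closed_Collect_le) (auto intro!: continuous_intros continuous_on_compose2[OF cont])
    ultimately show ?thesis by simp
  qed
  have nS: "(x, \<omega> x - e) \<notin> ?S" using e by (auto simp: epigraph_def)
  obtain a b where ab: "inner a (x, \<omega> x - e) < b" "\<forall>p\<in>?S. inner a p > b"
    using separating_hyperplane_closed_point[OF cS clS nS] by blast
  obtain a1 a2 where a: "a = (a1, a2)" by (cases a)
  have h1: "inner a1 x + a2 * (\<omega> x - e) < b" using ab(1) a by (simp add: inner_Pair)
  have h2: "\<And>z t. \<omega> z \<le> t \<Longrightarrow> inner a1 z + a2 * t > b"
    using ab(2) a by (auto simp: epigraph_def inner_Pair)
  have h3: "inner a1 x + a2 * \<omega> x > b" using h2 by simp
  have a2: "a2 > 0"
  proof -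
    have "a2 * e > 0" using h1 h3 by (simp add: algebra_simps)
    thus ?thesis using e by (simp add: zero_less_mult_iff)
  qed
  show ?thesis
  proof (intro exI conjI allI)
    fix z
    have "inner a1 z + a2 * \<omega> z > b" using h2 by simp
    hence "b / a2 - inner a1 z / a2 < \<omega> z" using a2 by (simp add: field_simps)
    thus "b / a2 + inner (- (1/a2) *\<^sub>R a1) z \<le> \<omega> z" by simp
  next
    have "\<omega> x - e < b / a2 - inner a1 x / a2" using h1 a2 by (simp add: field_simps)
    thus "\<omega> x - e < b / a2 + inner (- (1/a2) *\<^sub>R a1) x" by simp
  qed
qed

lemma fconj_ge: "fconj \<omega> v \<ge> ereal (inner z v - \<omega> z)"
  unfolding fconj_def by (rule SUP_upper) auto

lemma fconj_le: "(\<And>z. inner z v - \<omega> z \<le> c) \<Longrightarrow> fconj \<omega> v \<le> ereal c"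
  unfolding fconj_def by (rule SUP_least) auto

lemma fconj_nminf: "fconj \<omega> v \<noteq> -\<infinity>"
  using fconj_ge[where z=0 and \<omega>=\<omega> and v=v] by auto

theorem theorem2p21:
  fixes A :: "real^'n^'m" and \<omega> :: "real^'m \<Rightarrow> real" and K :: real
    and y :: "real^'n" and lam :: real and vbar :: "real^'m" and v :: "nat \<Rightarrow> real^'m"
  assumes conv: "convex_on UNIV \<omega>"
    and lip: "K-lipschitz_on UNIV \<omega>"
    and lam: "lam > 0"
    and vmin: "\<forall>w. PsiL A \<omega> y lam vbar \<le> PsiL A \<omega> y lam w"
    and lim: "(\<lambda>j. PsiL A \<omega> y lam (v j)) \<longlonglongrightarrow> PsiL A \<omega> y lam vbar"
  shows "(\<forall>u. PhiL A \<omega> y lam (y - lam *\<^sub>R (transpose A *v vbar)) \<le> PhiL A \<omega> y lam u)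
    \<and> (\<forall>j. PsiL A \<omega> y lam (v j) - PsiL A \<omega> y lam vbar \<ge>
           ereal ((1 / (2*lam)) * (norm ((y - lam *\<^sub>R (transpose A *v v j))
                                          - (y - lam *\<^sub>R (transpose A *v vbar))))^2))
    \<and> ((\<lambda>j. y - lam *\<^sub>R (transpose A *v v j)) \<longlonglongrightarrow> y - lam *\<^sub>R (transpose A *v vbar))
    \<and> (\<forall>j. PsiL A \<omega> y lam (v j) < \<infinity> \<longrightarrow>
         (let d = real_of_ereal (PsiL A \<omega> y lam (v j) - PsiL A \<omega> y lam vbar) in
          PhiL A \<omega> y lam (y - lam *\<^sub>R (transpose A *v v j))
            - PhiL A \<omega> y lam (y - lam *\<^sub>R (transpose A *v vbar))
          \<le> sqrt d * (2 * sqrt (2*lam) * K * onorm (\<lambda>x. A *v x) + sqrt d)))"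
proof -
  define T where "T v = transpose A *v v" for v
  define Q where "Q v = (1/(2*lam)) * (norm (lam *\<^sub>R T v - y))^2 - (1/(2*lam))*(norm y)^2" for v
  define Fr where "Fr v = real_of_ereal (fconj \<omega> v)" for v
  define fin where "fin v \<longleftrightarrow> fconj \<omega> v \<noteq> \<infinity>" for v
  define z where "z v = y - lam *\<^sub>R (transpose A *v v)" for v
  define Psi where "Psi = PsiL A \<omega> y lam"
  define Phi where "Phi = PhiL A \<omega> y lam"
  have K0: "K \<ge> 0" using lip by (rule lipschitz_on_nonneg)
  have cont: "continuous_on UNIV \<omega>" using lip by (rule lipschitz_on_continuous_on)
  have Lip: "\<omega> a - \<omega> b \<le> K * norm (a - b)" for a b
    using lipschitz_onD[OF lip, of a b] by (simp add: dist_norm dist_real_def)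
  have fe: "fin v \<Longrightarrow> fconj \<omega> v = ereal (Fr v)" for v
    using fconj_nminf[of \<omega> v] unfolding fin_def Fr_def by (cases "fconj \<omega> v") auto
  have Psi_fin: "fin v \<Longrightarrow> Psi v = ereal (Q v + Fr v)" for v
    unfolding Psi_def PsiL_def Q_def T_def using fe[of v] by simp
  have Psi_inf: "\<not> fin v \<Longrightarrow> Psi v = \<infinity>" for v
    unfolding Psi_def PsiL_def fin_def by simp
  have FY: "fin v \<Longrightarrow> inner x v - \<omega> x \<le> Fr v" for x v
    using fconj_ge[where z=x and \<omega>=\<omega> and v=v] fe[of v] by simp
  have finI: "(\<And>x. inner x v - \<omega> x \<le> c) \<Longrightarrow> fin v \<and> Fr v \<le> c" for v c
    using fconj_le[where \<omega>=\<omega> and v=v and c=c] fconj_nminf[of \<omega> v]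
    unfolding fin_def Fr_def by (cases "fconj \<omega> v") auto
  have inT: "inner (A *v u) w = inner u (T w)" for u w
    unfolding T_def by (metis dot_lmul_matrix inner_commute transpose_matrix_vector)
  have gap: "fin w \<Longrightarrow> Phi u + Q w + Fr w
     = (1/(2*lam)) * (norm (u - z w))^2 + (\<omega> (A *v u) + Fr w - inner (A *v u) w)" for u w
  proof -
    have zw: "z w = y - lam *\<^sub>R T w" unfolding z_def T_def ..
    have "(norm (u - y))^2 + (norm (lam *\<^sub>R T w - y))^2 - (norm y)^2
          = (norm (u - z w))^2 - 2*lam * inner u (T w)"
      unfolding zw power2_norm_eq_inner
      by (simp add: inner_simps inner_commute algebra_simps)
    note hyp = this
    have "Phi u + Q w + Fr w = \<omega> (A *v u) + Fr w + (1/(2*lam)) * ((norm (u - y))^2 + (norm (lam *\<^sub>R T w - y))^2 - (norm y)^2)"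
      unfolding Phi_def PhiL_def Q_def by (simp add: algebra_simps)
    also have "\<dots> = \<omega> (A *v u) + Fr w + (1/(2*lam)) * ((norm (u - z w))^2 - 2*lam * inner u (T w))"
      unfolding hyp ..
    also have "\<dots> = (1/(2*lam)) * (norm (u - z w))^2 + (\<omega> (A *v u) + Fr w - inner (A *v u) w)"
      using lam unfolding inT by (simp add: right_diff_distrib)
    finally show ?thesis .
  qed
  have Lin: "T (a + b) = T a + T b" "T (c *\<^sub>R a) = c *\<^sub>R T a" "T (a - b) = T a - T b" for a b c
    unfolding T_def by (simp_all add: vector_matrix_left_distrib vector_matrix_mult_diff_distrib
        scaleR_vector_matrix_assoc)
  obtain w0 c0 where w0: "\<And>x. c0 + inner w0 x \<le> \<omega> x"
    using eps_subgrad[OF conv cont, of 1 0] by auto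
  have "fin w0" using finI[of w0 "-c0"] w0 by (simp add: inner_commute algebra_simps)
  have finvb: "fin vbar"
  proof (rule ccontr)
    assume "\<not> fin vbar"
    hence "Psi vbar = \<infinity>" by (rule Psi_inf)
    moreover have "Psi vbar \<le> Psi w0" using vmin unfolding Psi_def by simp
    ultimately show False using Psi_fin[OF \<open>fin w0\<close>] by simp
  qed
  define P0 where "P0 = T vbar"
  define zb where "zb = z vbar"
  define xb where "xb = A *v zb"
  define pb where "pb = Q vbar + Fr vbar"
  have zbP: "zb = y - lam *\<^sub>R P0" unfolding zb_def z_def P0_def T_def ..
  have var: "Fr vbar - inner xb vbar \<le> Fr w - inner xb w" if fw: "fin w" for w
  proof -
    define d where "d = w - vbar"
    define D where "D = T d"
    define C where "C = lam/2 * (norm D)^2"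
    define g where "g = Fr vbar - Fr w + inner xb w - inner xb vbar"
    have C0: "C \<ge> 0" unfolding C_def using lam by simp
    have key: "g \<le> t * C" if t: "0 < t" "t \<le> 1" for t
    proof -
      define vt where "vt = vbar + t *\<^sub>R d"
      have "inner x vt - \<omega> x \<le> (1-t)*Fr vbar + t*Fr w" for x
      proof -
        have "inner x vt - \<omega> x = (1-t)*(inner x vbar - \<omega> x) + t*(inner x w - \<omega> x)"
          unfolding vt_def d_def by (simp add: inner_simps algebra_simps)
        also have "\<dots> \<le> (1-t)*Fr vbar + t*Fr w"
          using FY[OF finvb, of x] FY[OF fw, of x] t
          by (intro add_mono mult_left_mono) auto
        finally show ?thesis .
      qed
      from finI[OF this] have fvt: "fin vt" and Frt: "Fr vt \<le> (1-t)*Fr vbar + t*Fr w" by auto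
      have "Psi vbar \<le> Psi vt" using vmin unfolding Psi_def by simp
      hence le: "Q vbar + Fr vbar \<le> Q vt + Fr vt" using Psi_fin[OF finvb] Psi_fin[OF fvt] by simp
      have Tvt: "T vt = P0 + t *\<^sub>R D" unfolding vt_def D_def P0_def Lin ..
      have n1: "(norm (lam *\<^sub>R (P0 + t *\<^sub>R D) - y))^2
          = (norm (lam *\<^sub>R P0 - y))^2 - 2*lam*t*inner zb D + lam^2*t^2*(norm D)^2"
        unfolding zbP power2_norm_eq_inner
        by (simp add: inner_simps inner_commute algebra_simps power2_eq_square)
      have Qvt: "Q vt = Q vbar - t * inner zb D + t^2 * C"
        unfolding Q_def Tvt n1 C_def P0_def[symmetric] using lam
        by (simp add: field_simps power2_eq_square)
      have izD: "inner xb d = inner zb D" unfolding xb_def D_def by (rule inT)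
      have "t * g \<le> t * (t * C)"
        using le Qvt Frt izD unfolding g_def by (simp add: algebra_simps power2_eq_square inner_diff_right d_def)
      thus ?thesis using t by simp
    qed
    have "g \<le> 0"
    proof (rule ccontr)
      assume "\<not> g \<le> 0"
      hence g0: "g > 0" by simp
      define t where "t = min 1 (g / (C + 1))"
      have t0: "0 < t" "t \<le> 1" unfolding t_def using g0 C0 by auto
      have "t * C \<le> g / (C + 1) * C" unfolding t_def using C0 by (intro mult_right_mono) auto
      also have "\<dots> < g" using g0 C0 by (simp add: field_simps)
      finally show False using key[OF t0] by simp
    qed
    thus ?thesis unfolding g_def by simp
  qed
  have stepC: "Fr vbar - inner xb vbar \<le> - \<omega> xb"
  proof (rule field_le_epsilon)
    fix e :: real assume e: "0 < e"
    obtain w c where wc: "\<And>x. c + inner w x \<le> \<omega> x" "\<omega> xb - e < c + inner w xb"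
      using eps_subgrad[OF conv cont e, of xb] by auto
    have "fin w \<and> Fr w \<le> -c" using finI[of w "-c"] wc(1) by (simp add: inner_commute algebra_simps)
    with var[of w] wc(2) show "Fr vbar - inner xb vbar \<le> - \<omega> xb + e" by (simp add: inner_commute)
  qed
  have Frvb: "Fr vbar = inner xb vbar - \<omega> xb" using stepC FY[OF finvb, of xb] by simp
  have subgrad: "\<omega> x' \<ge> \<omega> xb + inner (x' - xb) vbar" for x'
    using FY[OF finvb, of x'] Frvb by (simp add: inner_diff_left)
  have Phizb: "Phi zb = - pb"
    using gap[OF finvb, of zb] Frvb unfolding pb_def xb_def zb_def by simp
  have part1: "\<forall>u. Phi zb \<le> Phi u"
  proof
    fix u
    have "Phi u + pb \<ge> 0" using gap[OF finvb, of u] FY[OF finvb, of "A *v u"] unfolding pb_def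
      by (smt (verit) zero_le_power2 divide_nonneg_nonneg lam mult_nonneg_nonneg)
    thus "Phi zb \<le> Phi u" using Phizb by simp
  qed
  have dist2: "(1/(2*lam)) * (norm (z w - zb))^2 \<le> Q w + Fr w - pb" if fw: "fin w" for w
  proof -
    have "Phi zb + Q w + Fr w = (1/(2*lam)) * (norm (zb - z w))^2 + (\<omega> (A *v zb) + Fr w - inner (A *v zb) w)"
      by (rule gap[OF fw])
    moreover have "\<omega> (A *v zb) + Fr w - inner (A *v zb) w \<ge> 0" using FY[OF fw, of "A *v zb"] by simp
    ultimately show ?thesis using Phizb by (simp add: norm_minus_commute)
  qed
  have Psivb: "Psi vbar = ereal pb" unfolding pb_def by (rule Psi_fin[OF finvb])
  have part2: "\<forall>j. Psi (v j) - Psi vbar \<ge> ereal ((1/(2*lam)) * (norm (z (v j) - zb))^2)"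
  proof
    fix j
    show "Psi (v j) - Psi vbar \<ge> ereal ((1/(2*lam)) * (norm (z (v j) - zb))^2)"
    proof (cases "fin (v j)")
      case True
      then show ?thesis using dist2[OF True] Psi_fin[OF True] Psivb by simp
    next
      case False
      then show ?thesis using Psi_inf[OF False] Psivb by simp
    qed
  qed
  have part3: "(\<lambda>j. z (v j)) \<longlonglongrightarrow> zb"
  proof (rule tendstoI)
    fix e :: real assume e: "0 < e"
    have "Psi vbar < ereal (pb + e^2/(2*lam))" using Psivb e lam by simp
    from order_tendstoD(2)[OF lim[folded Psi_def] this]
    show "\<forall>\<^sub>F j in sequentially. dist (z (v j)) zb < e"
    proof (rule eventually_mono)
      fix j assume h: "Psi (v j) < ereal (pb + e^2/(2*lam))"
      have fj: "fin (v j)" using h Psi_inf[of "v j"] by (cases "fin (v j)") auto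
      have "Q (v j) + Fr (v j) < pb + e^2/(2*lam)" using h Psi_fin[OF fj] by simp
      with dist2[OF fj] have "(1/(2*lam)) * (norm (z (v j) - zb))^2 < e^2/(2*lam)" by simp
      hence "(norm (z (v j) - zb))^2 < e^2" using lam by (simp add: field_simps)
      hence "norm (z (v j) - zb) < e" using e by (simp add: power_less_imp_less_base)
      thus "dist (z (v j)) zb < e" by (simp add: dist_norm)
    qed
  qed
  have part4: "\<forall>j. Psi (v j) < \<infinity> \<longrightarrow>
         (let d = real_of_ereal (Psi (v j) - Psi vbar) in
          Phi (z (v j)) - Phi zb \<le> sqrt d * (2 * sqrt (2*lam) * K * onorm (\<lambda>x. A *v x) + sqrt d))"
  proof (intro allI impI)
    fix j assume "Psi (v j) < \<infinity>"
    hence fj: "fin (v j)" using Psi_inf[of "v j"] by (cases "fin (v j)") auto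
    define d where "d = real_of_ereal (Psi (v j) - Psi vbar)"
    have dd: "d = Q (v j) + Fr (v j) - pb" unfolding d_def Psi_fin[OF fj] Psivb by simp
    define \<delta> where "\<delta> = z (v j) - zb"
    define nA where "nA = onorm (\<lambda>x. A *v x)"
    have h: "(1/(2*lam)) * (norm \<delta>)^2 \<le> d" using dist2[OF fj] unfolding dd \<delta>_def .
    have d0: "d \<ge> 0" using h lam by (smt (verit) zero_le_power2 divide_nonneg_nonneg mult_nonneg_nonneg)
    have zj: "z (v j) = zb + \<delta>" unfolding \<delta>_def by simp
    have Ad: "A *v z (v j) = xb + A *v \<delta>" unfolding zj xb_def by (simp add: matrix_vector_right_distrib)
    have n2: "(norm (zb + \<delta> - y))^2 = (norm (zb - y))^2 - 2*lam*inner \<delta> P0 + (norm \<delta>)^2"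
      unfolding zbP power2_norm_eq_inner
      by (simp add: inner_simps inner_commute algebra_simps)
    have iP: "inner (A *v \<delta>) vbar = inner \<delta> P0" unfolding P0_def by (rule inT)
    have id: "Phi (z (v j)) - Phi zb = (\<omega> (A *v z (v j)) - \<omega> xb - inner (A *v \<delta>) vbar) + (1/(2*lam))*(norm \<delta>)^2"
      unfolding Phi_def PhiL_def xb_def[symmetric] iP zj n2 using lam
      by (simp add: field_simps)
    have b1: "\<omega> (A *v z (v j)) - \<omega> xb \<le> K * norm (A *v \<delta>)" using Lip[of "A *v z (v j)" xb] Ad by simp
    have b2: "- inner (A *v \<delta>) vbar \<le> K * norm (A *v \<delta>)"
      using subgrad[of "xb - A *v \<delta>"] Lip[of "xb - A *v \<delta>" xb] by (simp add: inner_minus_left)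
    have b3: "norm (A *v \<delta>) \<le> nA * norm \<delta>" unfolding nA_def
      by (rule onorm) simp
    have nA0: "nA \<ge> 0" unfolding nA_def by (rule onorm_pos_le) simp
    have "(norm \<delta>)^2 \<le> 2*lam*d" using h lam by (simp add: field_simps)
    hence "sqrt ((norm \<delta>)^2) \<le> sqrt (2*lam*d)" by (rule real_sqrt_le_mono)
    hence b4: "norm \<delta> \<le> sqrt (2*lam) * sqrt d" by (simp add: real_sqrt_mult)
    have "Phi (z (v j)) - Phi zb \<le> 2 * K * norm (A *v \<delta>) + d" using id b1 b2 h by linarith
    also have "\<dots> \<le> 2 * K * (nA * norm \<delta>) + d" using b3 K0 by (simp add: mult_left_mono)
    also have "\<dots> \<le> 2 * K * (nA * (sqrt (2*lam) * sqrt d)) + d"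
      using b4 K0 nA0 by (simp add: mult_left_mono)
    also have "\<dots> = sqrt d * (2 * sqrt (2*lam) * K * nA + sqrt d)"
      using d0 by (simp add: algebra_simps)
    finally show "let d = real_of_ereal (Psi (v j) - Psi vbar) in
          Phi (z (v j)) - Phi zb \<le> sqrt d * (2 * sqrt (2*lam) * K * onorm (\<lambda>x. A *v x) + sqrt d)"
      unfolding Let_def d_def[symmetric] nA_def[symmetric] .
  qed
  show ?thesis
    unfolding Phi_def[symmetric] Psi_def[symmetric] z_def[symmetric]
    using part1 part2 part3 part4 unfolding zb_def by blast
qed

end
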